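(* Let $X\sim p_X$ and $Y\sim p_Y$ be continuous random variables and let $q_{X;m},q_{Y;m}$ be the densities of $\widetilde X_m,\widetilde Y_m$. Then for all $m\in(0,\infty)$, $$\int_{\mathbb R}|q_{X;m}(x)-q_{Y;m}(x)|\,dx\le\int_{\mathbb R}|p_X(x)-p_Y(x)|\,dx .$$ Moreover, for any $\alpha\in(0,\infty)$ and $m\ge4$, if $\mathbb E|X|^\alpha$ exists (is finite), then $$\Pr\big(|X|>\tfrac1{\sqrt m}\big)\,e^{-2\alpha/\sqrt m}\,\mathbb E|X|^\alpha\le\mathbb E|\widetilde X_m|^\alpha\le\Big(\frac2{\sqrt m}\Big)^\alpha+e^{\alpha/\sqrt m}\,\mathbb E|X|^\alpha .$$
   Context: For $m>0$, $[X]_m=\frac1m\lfloor\frac12+mX\rfloor$ with pmf $P_{X;m}[i]=\Pr([X]_m=i/m)=\int_{[(i-0.5)/m,(i+0.5)/m)}p_X$. $\widetilde X_m$ denotes a continuous random variable with density $q_{X;m}(x)=m\,P_{X;m}[i]$ for $x\in[(i-0.5)/m,(i+0.5)/m)$, $i\in\mathbb Z$; similarly $\widetilde Y_m\sim q_{Y;m}$. *)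

theory Defs
  imports "HOL-Analysis.Analysis"
begin

definition is_density :: "(real \<Rightarrow> real) \<Rightarrow> bool" where
  "is_density p \<longleftrightarrow> p \<in> borel_measurable borel \<and> (\<forall>x. 0 \<le> p x)
     \<and> integrable lborel p \<and> integral\<^sup>L lborel p = 1"

definition quant_pmf :: "(real \<Rightarrow> real) \<Rightarrow> real \<Rightarrow> int \<Rightarrow> real" where
  "quant_pmf p m i =
     (LINT x:{(real_of_int i - 1/2) / m ..< (real_of_int i + 1/2) / m}|lborel. p x)"

text \<open>q_{X;m}(x) = m * P_{X;m}[i] for x in [(i - 1/2)/m, (i + 1/2)/m),
  i.e. i = floor(1/2 + m x).\<close>
definition quant_density :: "(real \<Rightarrow> real) \<Rightarrow> real \<Rightarrow> real \<Rightarrow> real" where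
  "quant_density p m x = m * quant_pmf p m \<lfloor>1/2 + m * x\<rfloor>"

end

theory Submission
  imports Defs
begin

definition bin :: "real \<Rightarrow> real \<Rightarrow> int" where "bin m x = \<lfloor>1/2 + m * x\<rfloor>"

lemma bin_meas[measurable]: "bin m \<in> measurable borel (count_space UNIV)"
  unfolding bin_def by measurable

lemma pair_meas: "(\<lambda>z::real\<times>real. bin m (fst z) = bin m (snd z)) \<in> measurable (lborel \<Otimes>\<^sub>M lborel) (count_space UNIV)"
  by measurable

lemma bin_set: assumes "m > 0" shows "{x. bin m x = i} = {(real_of_int i - 1/2) / m ..< (real_of_int i + 1/2) / m}"
proof -
  have "bin m x = i \<longleftrightarrow> (real_of_int i - 1/2) / m \<le> x \<and> x < (real_of_int i + 1/2) / m" for x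
  proof -
    have "bin m x = i \<longleftrightarrow> real_of_int i \<le> 1/2 + m*x \<and> 1/2 + m*x < real_of_int i + 1"
      unfolding bin_def by (rule floor_eq_iff)
    also have "\<dots> \<longleftrightarrow> real_of_int i - 1/2 \<le> m*x \<and> m*x < real_of_int i + 1/2" by argo
    also have "\<dots> \<longleftrightarrow> (real_of_int i - 1/2) / m \<le> x \<and> x < (real_of_int i + 1/2) / m"
      using assms by (simp add: pos_divide_le_eq pos_less_divide_eq mult.commute)
    finally show ?thesis .
  qed
  then show ?thesis by (simp add: set_eq_iff)
qed

lemma bin_measure: assumes "m > 0" shows "(\<integral>\<^sup>+ y. ennreal m * indicator {y. bin m y = i} y \<partial>lborel) = 1"
proof -
  have "(\<integral>\<^sup>+ y. ennreal m * indicator {y. bin m y = i} y \<partial>lborel) = ennreal m * emeasure lborel {y. bin m y = i}"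
    by (subst nn_integral_cmult) (auto)
  also have "\<dots> = ennreal m * ennreal (1/m)"
  proof -
    have e: "(real_of_int i + 1/2) / m - (real_of_int i - 1/2) / m = 1/m" using assms by (simp add: field_simps)
    have "(real_of_int i - 1/2) / m \<le> (real_of_int i + 1/2) / m" using assms by (simp add: divide_right_mono)
    then show ?thesis by (simp add: bin_set[OF assms] e)
  qed
  also have "\<dots> = 1" using assms by (simp flip: ennreal_mult)
  finally show ?thesis .
qed

lemma bin_close: assumes "m > 0" "bin m x = bin m y" shows "\<bar>x - y\<bar> < 1/m"
proof -
  have "x \<in> {y. bin m y = bin m x}" "y \<in> {y. bin m y = bin m x}" using assms by auto
  then have "(real_of_int (bin m x) - 1/2) / m \<le> x" "x < (real_of_int (bin m x) + 1/2) / m"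
     "(real_of_int (bin m x) - 1/2) / m \<le> y" "y < (real_of_int (bin m x) + 1/2) / m"
    unfolding bin_set[OF assms(1)] by auto
  moreover have "(real_of_int (bin m x) + 1/2) / m - (real_of_int (bin m x) - 1/2) / m = 1/m"
    using assms by (simp add: field_simps)
  ultimately show ?thesis unfolding abs_less_iff
    by (smt (verit))
qed


lemma bin_measure': assumes "m > 0" shows "(\<integral>\<^sup>+ y. ennreal m * indicator {x. bin m x = bin m y} x \<partial>lborel) = 1"
proof -
  have "indicator {x. bin m x = bin m y} x = (indicator {y. bin m y = bin m x} y :: ennreal)" for y
    by (auto simp: indicator_def)
  then show ?thesis using bin_measure[OF assms, of "bin m x"] by simp
qed


lemma qd_meas[measurable]: "quant_density p m \<in> borel_measurable borel"
proof -
  have "quant_density p m = (\<lambda>y. m * quant_pmf p m (bin m y))"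
    by (auto simp: quant_density_def bin_def)
  also have "\<dots> \<in> borel_measurable borel"
    by (rule measurable_compose_countable[where f="\<lambda>i y. m * quant_pmf p m i" and g="bin m"]) auto
  finally show ?thesis .
qed

lemma ker_meas[measurable]: "(\<lambda>(x,y). indicator {x. bin m x = bin m y} x :: ennreal) \<in> borel_measurable (lborel \<Otimes>\<^sub>M lborel)"
proof -
  have "(\<lambda>(x,y). indicator {x. bin m x = bin m y} x :: ennreal) = indicator {z. bin m (fst z) = bin m (snd z)}"
    by (auto simp: indicator_def fun_eq_iff)
  also have "\<dots> \<in> borel_measurable (lborel \<Otimes>\<^sub>M lborel)"
  proof (rule borel_measurable_indicator)
    have "(\<lambda>z. bin m (fst z) = bin m (snd z)) -` {True} \<inter> space (lborel \<Otimes>\<^sub>M lborel) \<in> sets (lborel \<Otimes>\<^sub>M lborel)"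
      by (rule measurable_sets[OF pair_meas]) simp
    then show "{z. bin m (fst z) = bin m (snd z)} \<in> sets (lborel \<Otimes>\<^sub>M lborel)"
      by (simp add: vimage_def space_pair_measure)
  qed
  finally show ?thesis .
qed

lemma set_int_bin: fixes f :: "real \<Rightarrow> real" assumes "m > 0" "integrable lborel f"
  shows "(LINT x:{(real_of_int i - 1/2) / m ..< (real_of_int i + 1/2) / m}|lborel. f x)
     = (LINT x|lborel. indicator {x. bin m x = i} x * f x)"
  unfolding bin_set[OF assms(1), symmetric] set_lebesgue_integral_def by (auto intro!: Bochner_Integration.integral_cong simp: indicator_def)

lemma int_ind: "integrable lborel f \<Longrightarrow> integrable lborel (\<lambda>x. indicator {x. bin m x = i} x * (f x::real))"
  using integrable_real_mult_indicator[of "{x. bin m x = i}" lborel f] by (simp add: mult.commute)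

lemma qd_nn: assumes d: "is_density p" and m: "m > 0"
  shows "ennreal (quant_density p m y) = (\<integral>\<^sup>+x. ennreal m * indicator {x. bin m x = bin m y} x * ennreal (p x) \<partial>lborel)"
proof -
  have ip: "integrable lborel p" and p0: "\<And>x. 0 \<le> p x" using d by (auto simp: is_density_def)
  let ?i = "bin m y"
  have "quant_density p m y = m * (LINT x|lborel. indicator {x. bin m x = ?i} x * p x)"
    unfolding quant_density_def quant_pmf_def set_int_bin[OF m ip] bin_def ..
  moreover have "ennreal (LINT x|lborel. indicator {x. bin m x = ?i} x * p x) = (\<integral>\<^sup>+x. ennreal (indicator {x. bin m x = ?i} x * p x) \<partial>lborel)"
    by (rule nn_integral_eq_integral[symmetric]) (auto intro!: int_ind ip simp: p0)
  moreover have "(LINT x|lborel. indicator {x. bin m x = ?i} x * p x) \<ge> 0"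
    by (auto intro!: integral_nonneg_AE simp: p0)
  ultimately have "ennreal (quant_density p m y) = ennreal m * (\<integral>\<^sup>+x. ennreal (indicator {x. bin m x = ?i} x * p x) \<partial>lborel)"
    using m by (simp add: ennreal_mult)
  also have "\<dots> = (\<integral>\<^sup>+x. ennreal m * (indicator {x. bin m x = ?i} x * ennreal (p x)) \<partial>lborel)"
    using d unfolding is_density_def by (subst nn_integral_cmult[symmetric]) (auto intro!: nn_integral_cong split: split_indicator)
  finally show ?thesis by (simp add: mult.assoc)
qed


lemma ker_meas2[measurable]: "(\<lambda>z. indicator {x. bin m x = bin m (snd z)} (fst z) :: ennreal) \<in> borel_measurable (lborel \<Otimes>\<^sub>M lborel)"
  using ker_meas[of m] by (simp add: case_prod_beta')

lemma swap:
  assumes [measurable]: "h \<in> borel_measurable borel" "k \<in> borel_measurable borel"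
  shows "(\<integral>\<^sup>+ y. (\<integral>\<^sup>+ x. ennreal m * indicator {x. bin m x = bin m y} x * h x \<partial>lborel) * k y \<partial>lborel)
       = (\<integral>\<^sup>+ x. h x * (\<integral>\<^sup>+ y. ennreal m * indicator {x. bin m x = bin m y} x * k y \<partial>lborel) \<partial>lborel)"
proof -
  have M: "case_prod (\<lambda>x y. ennreal m * indicator {x. bin m x = bin m y} x * h x * k y) \<in> borel_measurable (lborel \<Otimes>\<^sub>M lborel)"
    unfolding case_prod_beta' by measurable
  have "(\<integral>\<^sup>+ y. (\<integral>\<^sup>+ x. ennreal m * indicator {x. bin m x = bin m y} x * h x \<partial>lborel) * k y \<partial>lborel)
     = (\<integral>\<^sup>+ y. (\<integral>\<^sup>+ x. ennreal m * indicator {x. bin m x = bin m y} x * h x * k y \<partial>lborel) \<partial>lborel)"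
    by (rule nn_integral_cong, rule nn_integral_multc[symmetric]) measurable
  also have "\<dots> = (\<integral>\<^sup>+ x. (\<integral>\<^sup>+ y. ennreal m * indicator {x. bin m x = bin m y} x * h x * k y \<partial>lborel) \<partial>lborel)"
    by (rule lborel_pair.Fubini'[OF M])
  also have "\<dots> = (\<integral>\<^sup>+ x. h x * (\<integral>\<^sup>+ y. ennreal m * indicator {x. bin m x = bin m y} x * k y \<partial>lborel) \<partial>lborel)"
    by (rule nn_integral_cong, subst nn_integral_cmult[symmetric]) (measurable, simp add: mult_ac)
  finally show ?thesis .
qed


lemma qd_eq: assumes d: "is_density p" and m: "m > 0"
  shows "quant_density p m y = m * (LINT x|lborel. indicator {x. bin m x = bin m y} x * p x)"
proof -
  have ip: "integrable lborel p" using d by (auto simp: is_density_def)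
  show ?thesis unfolding quant_density_def quant_pmf_def set_int_bin[OF m ip] bin_def ..
qed

lemma density_props: assumes "is_density p"
  shows "integrable lborel p" "\<And>x. 0 \<le> p x" "p \<in> borel_measurable borel" "integral\<^sup>L lborel p = 1"
  using assms by (auto simp: is_density_def)

lemma part1: assumes dX: "is_density pX" and dY: "is_density pY" and m: "m > 0"
  shows "(LINT x|lborel. \<bar>quant_density pX m x - quant_density pY m x\<bar>) \<le> (LINT x|lborel. \<bar>pX x - pY x\<bar>)"
proof -
  note X = density_props[OF dX] and Y = density_props[OF dY]
  have [measurable]: "pX \<in> borel_measurable borel" "pY \<in> borel_measurable borel" using X Y by auto
  define g where "g x = pX x - pY x" for x
  have [measurable]: "g \<in> borel_measurable borel" unfolding g_def by measurable
  have ig: "integrable lborel g" unfolding g_def using X(1) Y(1) by auto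
  have pw: "ennreal \<bar>quant_density pX m y - quant_density pY m y\<bar>
      \<le> (\<integral>\<^sup>+ x. ennreal m * indicator {x. bin m x = bin m y} x * ennreal \<bar>g x\<bar> \<partial>lborel) * 1" for y
  proof -
    let ?I = "indicator {x. bin m x = bin m y} :: real \<Rightarrow> real"
    have "(LINT x|lborel. ?I x * g x) = (LINT x|lborel. ?I x * pX x - ?I x * pY x)"
      by (simp add: g_def right_diff_distrib)
    also have "\<dots> = (LINT x|lborel. ?I x * pX x) - (LINT x|lborel. ?I x * pY x)"
      by (rule Bochner_Integration.integral_diff[OF int_ind[OF X(1)] int_ind[OF Y(1)]])
    finally have "quant_density pX m y - quant_density pY m y = m * (LINT x|lborel. ?I x * g x)"
      unfolding qd_eq[OF dX m] qd_eq[OF dY m] by (simp add: right_diff_distrib)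
    then have "\<bar>quant_density pX m y - quant_density pY m y\<bar> = m * \<bar>LINT x|lborel. ?I x * g x\<bar>"
      using m by (simp add: abs_mult)
    also have "\<dots> \<le> m * (LINT x|lborel. \<bar>?I x * g x\<bar>)"
      using m by (intro mult_left_mono integral_abs_bound) auto
    also have "(LINT x|lborel. \<bar>?I x * g x\<bar>) = (LINT x|lborel. ?I x * \<bar>g x\<bar>)"
      by (auto intro!: Bochner_Integration.integral_cong simp: abs_mult)
    finally have 1: "\<bar>quant_density pX m y - quant_density pY m y\<bar> \<le> m * (LINT x|lborel. ?I x * \<bar>g x\<bar>)" .
    have 2: "ennreal (LINT x|lborel. ?I x * \<bar>g x\<bar>) = (\<integral>\<^sup>+x. ennreal (?I x * \<bar>g x\<bar>) \<partial>lborel)"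
      by (rule nn_integral_eq_integral[symmetric]) (auto intro!: int_ind ig)
    have "ennreal \<bar>quant_density pX m y - quant_density pY m y\<bar> \<le> ennreal (m * (LINT x|lborel. ?I x * \<bar>g x\<bar>))"
      using 1 by (rule ennreal_leI)
    also have "\<dots> = ennreal m * ennreal (LINT x|lborel. ?I x * \<bar>g x\<bar>)"
      using m by (simp add: ennreal_mult integral_nonneg_AE)
    also have "\<dots> = ennreal m * (\<integral>\<^sup>+x. ennreal (?I x * \<bar>g x\<bar>) \<partial>lborel)"
      by (simp only: 2)
    also have "\<dots> = (\<integral>\<^sup>+ x. ennreal m * indicator {x. bin m x = bin m y} x * ennreal \<bar>g x\<bar> \<partial>lborel)"
      by (subst nn_integral_cmult[symmetric]) (auto intro!: nn_integral_cong split: split_indicator)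
    finally show ?thesis by simp
  qed
  have "(\<integral>\<^sup>+ y. ennreal \<bar>quant_density pX m y - quant_density pY m y\<bar> \<partial>lborel)
     \<le> (\<integral>\<^sup>+ y. (\<integral>\<^sup>+ x. ennreal m * indicator {x. bin m x = bin m y} x * ennreal \<bar>g x\<bar> \<partial>lborel) * 1 \<partial>lborel)"
    by (rule nn_integral_mono) (rule pw)
  also have "\<dots> = (\<integral>\<^sup>+ x. ennreal \<bar>g x\<bar> * (\<integral>\<^sup>+ y. ennreal m * indicator {x. bin m x = bin m y} x * 1 \<partial>lborel) \<partial>lborel)"
    by (rule swap) measurable
  also have "\<dots> = (\<integral>\<^sup>+ x. ennreal \<bar>g x\<bar> \<partial>lborel)"
    using bin_measure'[OF m] by simp
  finally have le: "(\<integral>\<^sup>+ y. ennreal \<bar>quant_density pX m y - quant_density pY m y\<bar> \<partial>lborel) \<le> (\<integral>\<^sup>+ x. ennreal \<bar>g x\<bar> \<partial>lborel)" .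
  have fin: "(\<integral>\<^sup>+ x. ennreal \<bar>g x\<bar> \<partial>lborel) < top"
    using ig by (simp add: integrable_iff_bounded)
  have "(LINT x|lborel. \<bar>quant_density pX m x - quant_density pY m x\<bar>) = enn2real (\<integral>\<^sup>+ y. ennreal \<bar>quant_density pX m y - quant_density pY m y\<bar> \<partial>lborel)"
    by (rule integral_eq_nn_integral) auto
  also have "\<dots> \<le> enn2real (\<integral>\<^sup>+ x. ennreal \<bar>g x\<bar> \<partial>lborel)"
    using le fin by (rule enn2real_mono)
  also have "\<dots> = (LINT x|lborel. \<bar>pX x - pY x\<bar>)"
    unfolding g_def by (rule integral_eq_nn_integral[symmetric]) auto
  finally show ?thesis .
qed

lemma ub_real:
  fixes x y m \<alpha> :: real
  assumes m: "4 \<le> m" and a: "0 < \<alpha>" and c: "\<bar>x - y\<bar> < 1/m"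
  shows "\<bar>y\<bar> powr \<alpha> \<le> (2 / sqrt m) powr \<alpha> + exp (\<alpha> / sqrt m) * \<bar>x\<bar> powr \<alpha>"
proof -
  define r where "r = sqrt m"
  have r2: "2 \<le> r" unfolding r_def using m real_sqrt_le_mono[of 4 m] by simp
  have mr: "1/m = (1/r) * (1/r)" unfolding r_def using m by (simp add: real_sqrt_mult[symmetric] del: real_sqrt_mult)
  have ir: "0 < 1/r" "1/r \<le> 1/2" using r2 by (auto simp: field_simps)
  have yl: "\<bar>y\<bar> \<le> \<bar>x\<bar> + (1/r)*(1/r)" using c mr by linarith
  have nn: "0 \<le> exp (\<alpha> / sqrt m) * \<bar>x\<bar> powr \<alpha>" by simp
  show ?thesis
  proof (cases "\<bar>x\<bar> \<le> 1/r")
    case True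
    have "(1/r)*(1/r) \<le> 1/r" using ir mult_right_mono[of "1/r" 1 "1/r"] by simp
    then have "\<bar>y\<bar> \<le> 2/r" using yl True by linarith
    then have "\<bar>y\<bar> powr \<alpha> \<le> (2/r) powr \<alpha>" using a by (intro powr_mono2) auto
    then show ?thesis using nn unfolding r_def by linarith
  next
    case False
    then have "(1/r)*(1/r) \<le> \<bar>x\<bar> * (1/r)" using ir by (intro mult_right_mono) auto
    then have "\<bar>y\<bar> \<le> \<bar>x\<bar> * (1 + 1/r)" using yl by (simp add: algebra_simps)
    then have "\<bar>y\<bar> powr \<alpha> \<le> (\<bar>x\<bar> * (1 + 1/r)) powr \<alpha>" using a by (intro powr_mono2) auto
    also have "\<dots> = \<bar>x\<bar> powr \<alpha> * (1 + 1/r) powr \<alpha>" using ir by (simp add: powr_mult)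
    finally have A: "\<bar>y\<bar> powr \<alpha> \<le> \<bar>x\<bar> powr \<alpha> * (1 + 1/r) powr \<alpha>" .
    have "(1 + 1/r) powr \<alpha> \<le> exp (1/r) powr \<alpha>"
      using ir a by (intro powr_mono2) (use exp_ge_add_one_self[of "1/r"] in auto)
    also have "exp (1/r) powr \<alpha> = exp (\<alpha> / sqrt m)" by (simp add: exp_powr_real r_def)
    finally have "\<bar>x\<bar> powr \<alpha> * (1 + 1/r) powr \<alpha> \<le> \<bar>x\<bar> powr \<alpha> * exp (\<alpha> / sqrt m)"
      by (intro mult_left_mono) auto
    with A have "\<bar>y\<bar> powr \<alpha> \<le> exp (\<alpha> / sqrt m) * \<bar>x\<bar> powr \<alpha>"
      by (simp add: mult.commute)
    then show ?thesis by (smt (verit) powr_ge_zero)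
  qed
qed

lemma lb_real:
  fixes x y m \<alpha> :: real
  assumes m: "4 \<le> m" and a: "0 < \<alpha>" and c: "\<bar>x - y\<bar> < 1/m" and x: "\<bar>x\<bar> > 1 / sqrt m"
  shows "exp (- 2 * \<alpha> / sqrt m) * \<bar>x\<bar> powr \<alpha> \<le> \<bar>y\<bar> powr \<alpha>"
proof -
  define r where "r = sqrt m"
  define u where "u = 1/r"
  have r2: "2 \<le> r" unfolding r_def using m real_sqrt_le_mono[of 4 m] by simp
  have mr: "1/m = u * u" unfolding r_def u_def using m by (simp add: real_sqrt_mult[symmetric] del: real_sqrt_mult)
  have ir: "0 < u" "u \<le> 1/2" using r2 unfolding u_def by (auto simp: field_simps)
  have xu: "\<bar>x\<bar> > u" using x unfolding u_def r_def .
  have yl: "\<bar>x\<bar> - u * u \<le> \<bar>y\<bar>" using c mr by linarith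
  have "u * u \<le> \<bar>x\<bar> * u" using ir xu by (intro mult_right_mono) auto
  then have y1: "\<bar>x\<bar> * (1 - u) \<le> \<bar>y\<bar>" using yl by (simp add: algebra_simps)
  have p0: "0 \<le> \<bar>x\<bar> * (1 - u)" using ir by simp
  have e1: "exp (-2*u) \<le> 1 - u"
  proof -
    have "1 + 2*u \<le> exp (2*u)" by (rule exp_ge_add_one_self)
    moreover have "1 \<le> (1 - u) * (1 + 2*u)" using ir by (simp add: algebra_simps)
    moreover have "(1 - u) * (1 + 2*u) \<le> (1 - u) * exp (2*u)" using ir by (intro mult_left_mono) auto
    ultimately have "1 \<le> (1 - u) * exp (2*u)" by linarith
    then show ?thesis by (simp add: exp_minus field_simps)
  qed
  have "exp (- 2 * \<alpha> / sqrt m) = exp (-2*u) powr \<alpha>"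
    by (simp add: exp_powr_real u_def r_def)
  also have "\<dots> \<le> (1 - u) powr \<alpha>" using e1 a by (intro powr_mono2) auto
  finally have "exp (- 2 * \<alpha> / sqrt m) * \<bar>x\<bar> powr \<alpha> \<le> (1 - u) powr \<alpha> * \<bar>x\<bar> powr \<alpha>"
    by (simp add: mult_right_mono)
  also have "\<dots> = (\<bar>x\<bar> * (1 - u)) powr \<alpha>" using ir by (simp add: powr_mult mult.commute)
  also have "\<dots> \<le> \<bar>y\<bar> powr \<alpha>" using a p0 y1 by (intro powr_mono2) auto
  finally show ?thesis .
qed


lemma int_indA: "A \<in> sets borel \<Longrightarrow> integrable lborel h \<Longrightarrow> integrable lborel (\<lambda>x. indicator A x * (h x::real))"
  using integrable_real_mult_indicator[of A lborel h] by (simp add: mult.commute)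

lemma qd_nonneg: assumes d: "is_density p" and m: "m > 0" shows "0 \<le> quant_density p m y"
  unfolding qd_eq[OF d m] using m density_props(2)[OF d]
  by (intro mult_nonneg_nonneg integral_nonneg_AE) auto

lemma chebyshev_assoc:
  fixes p :: "real \<Rightarrow> real" and t \<alpha> :: real
  assumes d: "is_density p" and t: "0 < t" and a: "0 < \<alpha>"
    and ie: "integrable lborel (\<lambda>x. \<bar>x\<bar> powr \<alpha> * p x)"
  shows "(LINT x:{x. \<bar>x\<bar> > t}|lborel. p x) * (LINT x|lborel. \<bar>x\<bar> powr \<alpha> * p x)
      \<le> (LINT x|lborel. indicator {x. \<bar>x\<bar> > t} x * (\<bar>x\<bar> powr \<alpha> * p x))"
proof -
  note P = density_props[OF d]
  have [measurable]: "p \<in> borel_measurable borel" using P by auto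
  define A where "A = {x::real. \<bar>x\<bar> > t}"
  define B where "B = {x::real. \<not> \<bar>x\<bar> > t}"
  have [measurable]: "A \<in> sets borel" "B \<in> sets borel" unfolding A_def B_def by measurable
  define T where "T = t powr \<alpha>"
  define ea where "ea = (LINT x|lborel. indicator A x * (\<bar>x\<bar> powr \<alpha> * p x))"
  define eb where "eb = (LINT x|lborel. indicator B x * (\<bar>x\<bar> powr \<alpha> * p x))"
  define pa where "pa = (LINT x|lborel. indicator A x * p x)"
  define pb where "pb = (LINT x|lborel. indicator B x * p x)"
  define E where "E = (LINT x|lborel. \<bar>x\<bar> powr \<alpha> * p x)"
  have iA: "integrable lborel (\<lambda>x. indicator A x * p x)" "integrable lborel (\<lambda>x. indicator B x * p x)"
    "integrable lborel (\<lambda>x. indicator A x * (\<bar>x\<bar> powr \<alpha> * p x))" "integrable lborel (\<lambda>x. indicator B x * (\<bar>x\<bar> powr \<alpha> * p x))"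
    using P(1) ie by (auto intro!: int_indA)
  have sAB: "indicator A x + indicator B x = (1::real)" for x by (auto simp: A_def B_def indicator_def)
  have "pa + pb = (LINT x|lborel. indicator A x * p x + indicator B x * p x)"
    unfolding pa_def pb_def by (rule Bochner_Integration.integral_add[symmetric]) (fact iA)+
  also have "\<dots> = 1" using P(4) by (simp add: distrib_right[symmetric] sAB)
  finally have pab: "pa + pb = 1" .
  have "ea + eb = (LINT x|lborel. indicator A x * (\<bar>x\<bar> powr \<alpha> * p x) + indicator B x * (\<bar>x\<bar> powr \<alpha> * p x))"
    unfolding ea_def eb_def by (rule Bochner_Integration.integral_add[symmetric]) (fact iA)+
  also have "\<dots> = E" unfolding E_def by (simp add: distrib_right[symmetric] sAB)
  finally have eab: "ea + eb = E" .
  have pa0: "0 \<le> pa" "0 \<le> pb" unfolding pa_def pb_def using P(2) by (auto intro!: integral_nonneg_AE)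
  have "T * pa = (LINT x|lborel. indicator A x * (T * p x))"
    unfolding pa_def by (simp add: mult.left_commute)
  also have "\<dots> \<le> ea" unfolding ea_def
  proof (rule integral_mono)
    show "integrable lborel (\<lambda>x. indicator A x * (T * p x))" using iA(1) by (simp add: mult.left_commute)
    show "integrable lborel (\<lambda>x. indicator A x * (\<bar>x\<bar> powr \<alpha> * p x))" by (fact iA)
    fix x
    show "indicator A x * (T * p x) \<le> indicator A x * (\<bar>x\<bar> powr \<alpha> * p x)"
    proof (cases "x \<in> A")
      case True
      then have "T \<le> \<bar>x\<bar> powr \<alpha>" unfolding T_def A_def using t a by (intro powr_mono2) auto
      then show ?thesis using True P(2)[of x] by (simp add: mult_right_mono)
    qed simp
  qed
  finally have ha: "T * pa \<le> ea" .
  have "eb \<le> (LINT x|lborel. indicator B x * (T * p x))" unfolding eb_def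
  proof (rule integral_mono)
    show "integrable lborel (\<lambda>x. indicator B x * (T * p x))" using iA(2) by (simp add: mult.left_commute)
    show "integrable lborel (\<lambda>x. indicator B x * (\<bar>x\<bar> powr \<alpha> * p x))" by (fact iA)
    fix x
    show "indicator B x * (\<bar>x\<bar> powr \<alpha> * p x) \<le> indicator B x * (T * p x)"
    proof (cases "x \<in> B")
      case True
      then have "\<bar>x\<bar> powr \<alpha> \<le> T" unfolding T_def B_def using t a by (intro powr_mono2) auto
      then show ?thesis using True P(2)[of x] by (simp add: mult_right_mono)
    qed simp
  qed
  also have "\<dots> = T * pb" unfolding pb_def by (simp add: mult.left_commute)
  finally have hb: "eb \<le> T * pb" .
  have 1: "pa * eb \<le> pa * (T * pb)" using hb pa0 by (intro mult_left_mono) auto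
  have 2: "pb * (T * pa) \<le> pb * ea" using ha pa0 by (intro mult_left_mono) auto
  have "pa * E = pa * ea + pa * eb" unfolding eab[symmetric] by (simp add: algebra_simps)
  also have "\<dots> \<le> pa * ea + pb * ea" using 1 2 by (simp add: algebra_simps)
  also have "\<dots> = (pa + pb) * ea" by (simp add: algebra_simps)
  also have "\<dots> = ea" using pab by simp
  finally have "pa * E \<le> ea" .
  moreover have "(LINT x:{x. \<bar>x\<bar> > t}|lborel. p x) = pa"
    unfolding pa_def A_def set_lebesgue_integral_def by simp
  ultimately show ?thesis unfolding E_def ea_def A_def by simp
qed


lemma part2:
  fixes p :: "real \<Rightarrow> real" and \<alpha> m :: real
  assumes d: "is_density p" and a: "0 < \<alpha>" and m4: "4 \<le> m"
    and ie: "integrable lborel (\<lambda>x. \<bar>x\<bar> powr \<alpha> * p x)"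
  shows "integrable lborel (\<lambda>x. \<bar>x\<bar> powr \<alpha> * quant_density p m x)
           \<and> (LINT x:{x. \<bar>x\<bar> > 1 / sqrt m}|lborel. p x) * exp (- 2 * \<alpha> / sqrt m)
               * (LINT x|lborel. \<bar>x\<bar> powr \<alpha> * p x)
             \<le> (LINT x|lborel. \<bar>x\<bar> powr \<alpha> * quant_density p m x)
           \<and> (LINT x|lborel. \<bar>x\<bar> powr \<alpha> * quant_density p m x)
             \<le> (2 / sqrt m) powr \<alpha> + exp (\<alpha> / sqrt m) * (LINT x|lborel. \<bar>x\<bar> powr \<alpha> * p x)"
proof -
  note P = density_props[OF d]
  have m: "0 < m" using m4 by simp
  have [measurable]: "p \<in> borel_measurable borel" using P by auto
  define f where "f y = \<bar>y\<bar> powr \<alpha>" for y :: real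
  have [measurable]: "f \<in> borel_measurable borel" unfolding f_def by measurable
  have f0: "0 \<le> f y" for y unfolding f_def by simp
  define C where "C = (2 / sqrt m) powr \<alpha>"
  define e where "e = exp (\<alpha> / sqrt m)"
  define c where "c = exp (- 2 * \<alpha> / sqrt m)"
  define E where "E = (LINT x|lborel. \<bar>x\<bar> powr \<alpha> * p x)"
  define A where "A = {x::real. \<bar>x\<bar> > 1 / sqrt m}"
  have [measurable]: "A \<in> sets borel" unfolding A_def by measurable
  define G where "G x = (\<integral>\<^sup>+ y. ennreal m * indicator {x. bin m x = bin m y} x * ennreal (f y) \<partial>lborel)" for x
  have I: "(\<integral>\<^sup>+ y. ennreal (f y * quant_density p m y) \<partial>lborel) = (\<integral>\<^sup>+ x. ennreal (p x) * G x \<partial>lborel)"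
  proof -
    have "(\<integral>\<^sup>+ y. ennreal (f y * quant_density p m y) \<partial>lborel)
       = (\<integral>\<^sup>+ y. (\<integral>\<^sup>+ x. ennreal m * indicator {x. bin m x = bin m y} x * ennreal (p x) \<partial>lborel) * ennreal (f y) \<partial>lborel)"
      by (rule nn_integral_cong) (simp only: ennreal_mult'[OF f0] qd_nn[OF d m] mult.commute)
    also have "\<dots> = (\<integral>\<^sup>+ x. ennreal (p x) * G x \<partial>lborel)"
      unfolding G_def by (rule swap) measurable
    finally show ?thesis .
  qed
  have Gub: "G x \<le> ennreal (C + e * f x)" for x
  proof -
    have "G x \<le> (\<integral>\<^sup>+ y. ennreal m * indicator {x. bin m x = bin m y} x * ennreal (C + e * f x) \<partial>lborel)"
      unfolding G_def
    proof (rule nn_integral_mono)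
      fix y
      show "ennreal m * indicator {x. bin m x = bin m y} x * ennreal (f y) \<le> ennreal m * indicator {x. bin m x = bin m y} x * ennreal (C + e * f x)"
      proof (cases "bin m x = bin m y")
        case True
        then have "\<bar>x - y\<bar> < 1/m" by (rule bin_close[OF m])
        then have "f y \<le> C + e * f x" unfolding f_def C_def e_def by (rule ub_real[OF m4 a])
        then show ?thesis using True by (auto intro!: mult_left_mono ennreal_leI)
      qed simp
    qed
    also have "\<dots> = ennreal (C + e * f x) * (\<integral>\<^sup>+ y. ennreal m * indicator {x. bin m x = bin m y} x \<partial>lborel)"
      by (subst nn_integral_cmult[symmetric]) (measurable, simp add: mult_ac)
    also have "\<dots> = ennreal (C + e * f x)" using bin_measure'[OF m] by simp
    finally show ?thesis .
  qed
  have Glb: "ennreal (indicator A x * (c * f x)) \<le> G x" for x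
  proof (cases "x \<in> A")
    case True
    have "ennreal (c * f x) = ennreal (c * f x) * (\<integral>\<^sup>+ y. ennreal m * indicator {x. bin m x = bin m y} x \<partial>lborel)"
      using bin_measure'[OF m] by simp
    also have "\<dots> = (\<integral>\<^sup>+ y. ennreal m * indicator {x. bin m x = bin m y} x * ennreal (c * f x) \<partial>lborel)"
      by (subst nn_integral_cmult[symmetric]) (measurable, simp add: mult_ac)
    also have "\<dots> \<le> G x" unfolding G_def
    proof (rule nn_integral_mono)
      fix y
      show "ennreal m * indicator {x. bin m x = bin m y} x * ennreal (c * f x) \<le> ennreal m * indicator {x. bin m x = bin m y} x * ennreal (f y)"
      proof (cases "bin m x = bin m y")
        case T2: True
        then have "\<bar>x - y\<bar> < 1/m" by (rule bin_close[OF m])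
        then have "c * f x \<le> f y" unfolding f_def c_def using True unfolding A_def by (intro lb_real[OF m4 a]) auto
        then show ?thesis using T2 by (auto intro!: mult_left_mono ennreal_leI)
      qed simp
    qed
    finally show ?thesis using True by simp
  qed simp
  have ipU: "integrable lborel (\<lambda>x. p x * (C + e * f x))"
  proof -
    have "integrable lborel (\<lambda>x. C * p x + e * (\<bar>x\<bar> powr \<alpha> * p x))" using P(1) ie by auto
    then show ?thesis by (simp add: f_def algebra_simps)
  qed
  have iUval: "(LINT x|lborel. p x * (C + e * f x)) = C + e * E"
  proof -
    have "(LINT x|lborel. p x * (C + e * f x)) = (LINT x|lborel. C * p x + e * (\<bar>x\<bar> powr \<alpha> * p x))"
      by (simp add: f_def algebra_simps)
    also have "\<dots> = C * (LINT x|lborel. p x) + e * E"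
      unfolding E_def using P(1) ie by simp
    finally show ?thesis using P(4) by simp
  qed
  have ipL: "integrable lborel (\<lambda>x. p x * (indicator A x * (c * f x)))"
  proof -
    have "integrable lborel (\<lambda>x. c * (indicator A x * (\<bar>x\<bar> powr \<alpha> * p x)))" using ie by (auto intro!: int_indA)
    then show ?thesis by (simp add: f_def mult_ac)
  qed
  have iLval: "(LINT x|lborel. p x * (indicator A x * (c * f x))) = c * (LINT x|lborel. indicator A x * (\<bar>x\<bar> powr \<alpha> * p x))"
    by (simp add: f_def mult_ac)
  have C0: "0 \<le> C" and e0: "0 \<le> e" and c0: "0 \<le> c" unfolding C_def e_def c_def by auto
  have CeE0: "0 \<le> C + e * E" unfolding C_def e_def E_def using P(2)
    by (intro add_nonneg_nonneg mult_nonneg_nonneg integral_nonneg_AE) auto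
  have up: "(\<integral>\<^sup>+ y. ennreal (f y * quant_density p m y) \<partial>lborel) \<le> ennreal (C + e * E)"
  proof -
    have "(\<integral>\<^sup>+ y. ennreal (f y * quant_density p m y) \<partial>lborel) \<le> (\<integral>\<^sup>+ x. ennreal (p x) * ennreal (C + e * f x) \<partial>lborel)"
      unfolding I by (intro nn_integral_mono mult_left_mono Gub) auto
    also have "\<dots> = (\<integral>\<^sup>+ x. ennreal (p x * (C + e * f x)) \<partial>lborel)"
      by (intro nn_integral_cong) (simp add: ennreal_mult'[OF P(2)])
    also have "\<dots> = ennreal (LINT x|lborel. p x * (C + e * f x))"
      using P(2) f0 C0 e0
      by (intro nn_integral_eq_integral ipU AE_I2 mult_nonneg_nonneg add_nonneg_nonneg) auto
    also have "\<dots> = ennreal (C + e * E)" by (simp only: iUval)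
    finally show ?thesis .
  qed
  have lo: "ennreal (c * (LINT x|lborel. indicator A x * (\<bar>x\<bar> powr \<alpha> * p x))) \<le> (\<integral>\<^sup>+ y. ennreal (f y * quant_density p m y) \<partial>lborel)"
  proof -
    have "ennreal (c * (LINT x|lborel. indicator A x * (\<bar>x\<bar> powr \<alpha> * p x))) = (\<integral>\<^sup>+ x. ennreal (p x * (indicator A x * (c * f x))) \<partial>lborel)"
      unfolding iLval[symmetric] using P(2) f0 c0
      by (intro nn_integral_eq_integral[symmetric] ipL AE_I2 mult_nonneg_nonneg) auto
    also have "\<dots> = (\<integral>\<^sup>+ x. ennreal (p x) * ennreal (indicator A x * (c * f x)) \<partial>lborel)"
      by (intro nn_integral_cong) (simp add: ennreal_mult'[OF P(2)])
    also have "\<dots> \<le> (\<integral>\<^sup>+ y. ennreal (f y * quant_density p m y) \<partial>lborel)"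
      unfolding I by (intro nn_integral_mono mult_left_mono Glb) auto
    finally show ?thesis .
  qed
  have fq0: "0 \<le> f y * quant_density p m y" for y using f0 qd_nonneg[OF d m] by simp
  have intq: "integrable lborel (\<lambda>x. f x * quant_density p m x)"
  proof (rule integrableI_bounded)
    show "(\<lambda>x. f x * quant_density p m x) \<in> borel_measurable lborel" by measurable
    have "(\<integral>\<^sup>+ x. ennreal (norm (f x * quant_density p m x)) \<partial>lborel) = (\<integral>\<^sup>+ y. ennreal (f y * quant_density p m y) \<partial>lborel)"
      using fq0 by (intro nn_integral_cong) simp
    also have "\<dots> < \<infinity>" using up by (simp add: le_less_trans)
    finally show "(\<integral>\<^sup>+ x. ennreal (norm (f x * quant_density p m x)) \<partial>lborel) < \<infinity>" .
  qed
  have Lq: "(LINT x|lborel. f x * quant_density p m x) = enn2real (\<integral>\<^sup>+ y. ennreal (f y * quant_density p m y) \<partial>lborel)"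
    using fq0 by (intro integral_eq_nn_integral) auto
  have U: "(LINT x|lborel. f x * quant_density p m x) \<le> C + e * E"
    unfolding Lq using enn2real_mono[OF up] CeE0 by simp
  have Lw: "c * (LINT x|lborel. indicator A x * (\<bar>x\<bar> powr \<alpha> * p x)) \<le> (LINT x|lborel. f x * quant_density p m x)"
  proof -
    have fin: "(\<integral>\<^sup>+ y. ennreal (f y * quant_density p m y) \<partial>lborel) < top" using up by (simp add: le_less_trans)
    have nnA: "0 \<le> (LINT x|lborel. indicator A x * (\<bar>x\<bar> powr \<alpha> * p x))"
      using P(2) by (intro integral_nonneg_AE) auto
    show ?thesis unfolding Lq using enn2real_mono[OF lo fin] c0 nnA by simp
  qed
  have ch: "(LINT x:A|lborel. p x) * E \<le> (LINT x|lborel. indicator A x * (\<bar>x\<bar> powr \<alpha> * p x))"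
    unfolding A_def E_def by (rule chebyshev_assoc[OF d _ a ie]) (use m in simp)
  have "(LINT x:A|lborel. p x) * c * E \<le> c * (LINT x|lborel. indicator A x * (\<bar>x\<bar> powr \<alpha> * p x))"
    using mult_left_mono[OF ch, of c] by (simp add: c_def mult_ac)
  with Lw have L: "(LINT x:A|lborel. p x) * c * E \<le> (LINT x|lborel. f x * quant_density p m x)" by linarith
  show ?thesis using intq L U unfolding f_def C_def e_def c_def E_def A_def by simp
qed


theorem mainTheorem12:
  fixes pX pY :: "real \<Rightarrow> real"
  assumes dX: "is_density pX" and dY: "is_density pY"
  shows "(\<forall>m::real. 0 < m \<longrightarrow>
           (LINT x|lborel. \<bar>quant_density pX m x - quant_density pY m x\<bar>)
             \<le> (LINT x|lborel. \<bar>pX x - pY x\<bar>))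
      \<and> (\<forall>(\<alpha>::real) (m::real). 0 < \<alpha> \<longrightarrow> 4 \<le> m \<longrightarrow>
           integrable lborel (\<lambda>x. \<bar>x\<bar> powr \<alpha> * pX x) \<longrightarrow>
             integrable lborel (\<lambda>x. \<bar>x\<bar> powr \<alpha> * quant_density pX m x)
           \<and> (LINT x:{x. \<bar>x\<bar> > 1 / sqrt m}|lborel. pX x) * exp (- 2 * \<alpha> / sqrt m)
               * (LINT x|lborel. \<bar>x\<bar> powr \<alpha> * pX x)
             \<le> (LINT x|lborel. \<bar>x\<bar> powr \<alpha> * quant_density pX m x)
           \<and> (LINT x|lborel. \<bar>x\<bar> powr \<alpha> * quant_density pX m x)
             \<le> (2 / sqrt m) powr \<alpha> + exp (\<alpha> / sqrt m) * (LINT x|lborel. \<bar>x\<bar> powr \<alpha> * pX x))"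
  using part1[OF dX dY] part2[OF dX] by blast

end
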